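(* Let $\epsilon>0$, $c_\epsilon=4/\epsilon$, weights $w_i>0$ with $\sum_{i=1}^Nw_i=1$, and $C_1,\dots,C_N$ symmetric positive semidefinite $n\times n$ matrices. Define $\mathcal G$ on symmetric positive semidefinite matrices by $\mathcal G(X)=\frac\epsilon4\sum_{i=1}^Nw_i\big[-I+(I+c_\epsilon^2X^{1/2}C_iX^{1/2})^{1/2}\big]$. (1) If there exists $\alpha>0$ with $C_i\ge\alpha I$ for all $i$ and $0<\epsilon<2\alpha$, then $\mathcal G$ has a strictly positive definite fixed point. (2) If $u\in\mathbb R^n$, $\|u\|=1$, and $0<\epsilon<2\sum_iw_i\langle u,C_iu\rangle$, then $X_u=x_u\,uu^T$ is a fixed point of $\mathcal G$, where $x_u$ is the unique positive solution of $x=\frac\epsilon4\sum_{i=1}^Nw_i\big[-1+(1+c_\epsilon^2x\langle u,C_iu\rangle)^{1/2}\big]$.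
   Context: For symmetric matrices, $A\ge B$ means $A-B$ is positive semidefinite; square roots are positive semidefinite square roots. *)

theory Defs
  imports "HOL-Analysis.Analysis"
begin

definition sym_mat :: "real^'n^'n \<Rightarrow> bool" where
  "sym_mat A \<longleftrightarrow> transpose A = A"

definition psd_mat :: "real^'n^'n \<Rightarrow> bool" where
  "psd_mat A \<longleftrightarrow> sym_mat A \<and> (\<forall>x. 0 \<le> x \<bullet> (A *v x))"

definition pd_mat :: "real^'n^'n \<Rightarrow> bool" where
  "pd_mat A \<longleftrightarrow> sym_mat A \<and> (\<forall>x. x \<noteq> 0 \<longrightarrow> 0 < x \<bullet> (A *v x))"

definition loewner_ge :: "real^'n^'n \<Rightarrow> real^'n^'n \<Rightarrow> bool" where
  "loewner_ge A B \<longleftrightarrow> psd_mat (A - B)"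

definition msqrt :: "real^'n^'n \<Rightarrow> real^'n^'n" where
  "msqrt X = (THE S. psd_mat S \<and> S ** S = X)"

definition outer :: "real^'n \<Rightarrow> real^'n \<Rightarrow> real^'n^'n" where
  "outer u v = (\<chi> i j. u $ i * v $ j)"

definition Gmap :: "real \<Rightarrow> nat \<Rightarrow> (nat \<Rightarrow> real) \<Rightarrow> (nat \<Rightarrow> real^'n^'n) \<Rightarrow> real^'n^'n \<Rightarrow> real^'n^'n" where
  "Gmap eps N w C X =
     (eps / 4) *\<^sub>R (\<Sum>i\<in>{1..N}. w i *\<^sub>R
        (- mat 1 + msqrt (mat 1 + ((4 / eps)^2) *\<^sub>R (msqrt X ** C i ** msqrt X))))"

definition gscal :: "real \<Rightarrow> nat \<Rightarrow> (nat \<Rightarrow> real) \<Rightarrow> (nat \<Rightarrow> real^'n^'n) \<Rightarrow> real^'n \<Rightarrow> real \<Rightarrow> real" where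
  "gscal eps N w C u x =
     (eps / 4) * (\<Sum>i\<in>{1..N}. w i * (- 1 + sqrt (1 + ((4 / eps)^2) * x * (u \<bullet> (C i *v u)))))"

end

theory Submission
  imports Defs
begin


lemma sym_inner:
  assumes "sym_mat A" shows "x \<bullet> (A *v y) = (A *v x) \<bullet> y"
proof -
  have "x v* A = A *v x" using assms unfolding sym_mat_def
    by (metis vector_transpose_matrix)
  then show ?thesis by (metis dot_lmul_matrix)
qed

definition l1m :: "real^'n^'n \<Rightarrow> real" where
  "l1m M = (\<Sum>i\<in>UNIV. \<Sum>j\<in>UNIV. \<bar>M$i$j\<bar>)"

lemma l1m_nonneg: "0 \<le> l1m M"
  unfolding l1m_def by (intro sum_nonneg) auto

lemma quad_l1: "\<bar>x \<bullet> (M *v x)\<bar> \<le> l1m M * (norm x)^2"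
proof -
  have "x \<bullet> (M *v x) = (\<Sum>i\<in>UNIV. \<Sum>j\<in>UNIV. x$i * M$i$j * x$j)"
    by (simp add: inner_vec_def matrix_vector_mult_def sum_distrib_left mult.assoc)
  also have "\<bar>\<dots>\<bar> \<le> (\<Sum>i\<in>UNIV. \<Sum>j\<in>UNIV. \<bar>x$i * M$i$j * x$j\<bar>)"
    by (rule order_trans[OF sum_abs]) (intro sum_mono sum_abs)
  also have "\<dots> \<le> (\<Sum>i\<in>UNIV. \<Sum>j\<in>UNIV. \<bar>M$i$j\<bar> * (norm x)^2)"
  proof (intro sum_mono)
    fix i j
    have "\<bar>x$i\<bar> * \<bar>x$j\<bar> \<le> norm x * norm x"
      by (intro mult_mono component_le_norm_cart) auto
    from mult_right_mono[OF this abs_ge_zero[of "M$i$j"]]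
    show "\<bar>x$i * M$i$j * x$j\<bar> \<le> \<bar>M$i$j\<bar> * (norm x)^2"
      by (simp add: abs_mult power2_eq_square mult_ac)
  qed
  also have "\<dots> = l1m M * (norm x)^2"
    by (simp add: l1m_def sum_distrib_right)
  finally show ?thesis .
qed

lemma eig_max:
  fixes A :: "real^'n^'n"
  assumes sym: "sym_mat A" and V: "subspace V" and inv: "\<forall>x\<in>V. A *v x \<in> V" and ne: "V \<noteq> {0}"
  shows "\<exists>v\<in>V. norm v = 1 \<and> A *v v = (v \<bullet> (A *v v)) *\<^sub>R v
           \<and> (\<forall>x\<in>V. norm x = 1 \<longrightarrow> x \<bullet> (A *v x) \<le> v \<bullet> (A *v v))"
proof -
  let ?K = "V \<inter> sphere 0 1"
  have cK: "compact ?K" using closed_subspace[OF V] compact_sphere by (rule closed_Int_compact)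
  obtain y where y: "y \<in> V" "y \<noteq> 0" using ne V subspace_0 by blast
  have "y /\<^sub>R norm y \<in> ?K" using y V by (simp add: subspace_mul)
  then have neK: "?K \<noteq> {}" by blast
  have cont: "continuous_on ?K (\<lambda>x. x \<bullet> (A *v x))"
    by (intro continuous_intros bounded_linear.continuous_on[OF matrix_vector_mul_bounded_linear])
  obtain v where v: "v \<in> ?K" and vmax: "\<forall>z\<in>?K. z \<bullet> (A *v z) \<le> v \<bullet> (A *v v)"
    using continuous_attains_sup[OF cK neK cont] by blast
  define l where "l = v \<bullet> (A *v v)"
  have vV: "v \<in> V" and nv: "norm v = 1" using v by auto
  have vv: "v \<bullet> v = 1" using nv by (simp add: dot_square_norm)
  have bound: "z \<bullet> (A *v z) \<le> l * (z \<bullet> z)" if "z \<in> V" for z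
  proof (cases "z = 0")
    case True then show ?thesis by simp
  next
    case False
    have "z /\<^sub>R norm z \<in> ?K" using that False V by (simp add: subspace_mul)
    then have "(z /\<^sub>R norm z) \<bullet> (A *v (z /\<^sub>R norm z)) \<le> l" using vmax l_def by blast
    then have "(z \<bullet> (A *v z)) / (norm z)^2 \<le> l"
      by (simp add: matrix_vector_mult_scaleR power2_eq_square divide_inverse mult_ac)
    then show ?thesis using False by (simp add: divide_le_eq dot_square_norm)
  qed
  have orth: "w \<bullet> (A *v v) = 0" if w: "w \<in> V" "w \<bullet> v = 0" for w
  proof (rule ccontr)
    assume a0: "w \<bullet> (A *v v) \<noteq> 0"
    define a where "a = w \<bullet> (A *v v)"
    define b where "b = w \<bullet> (A *v w) - l * (w \<bullet> w)"
    have key: "2 * t * a + t^2 * b \<le> 0" for t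
    proof -
      have zV: "v + t *\<^sub>R w \<in> V" using vV w V by (simp add: subspace_add subspace_mul)
      have "(v + t *\<^sub>R w) \<bullet> (A *v (v + t *\<^sub>R w))
            = l + 2 * t * a + t^2 * (w \<bullet> (A *v w))"
      proof -
        have "v \<bullet> (A *v w) = a" using sym_inner[OF sym, of v w] a_def by (simp add: inner_commute)
        then show ?thesis
          by (simp add: l_def a_def matrix_vector_right_distrib matrix_vector_mult_scaleR
              inner_add_left inner_add_right algebra_simps power2_eq_square)
      qed
      moreover have "(v + t *\<^sub>R w) \<bullet> (v + t *\<^sub>R w) = 1 + t^2 * (w \<bullet> w)"
        using vv w(2) by (simp add: inner_add_left inner_add_right inner_commute power2_eq_square)
      ultimately show ?thesis using bound[OF zV] by (simp add: b_def algebra_simps)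
    qed
    define B where "B = \<bar>b\<bar> + 1"
    have B0: "B > 0" by (simp add: B_def add_nonneg_pos)
    define t where "t = a / B"
    have bB: "\<bar>b\<bar> = B - 1" by (simp add: B_def)
    have m: "2 * t * a + t^2 * b \<ge> 2 * t * a - t^2 * \<bar>b\<bar>"
    proof -
      have "- \<bar>b\<bar> \<le> b" by simp
      from mult_left_mono[OF this zero_le_power2[of t]] show ?thesis by simp
    qed
    have e: "2 * t * a - t^2 * \<bar>b\<bar> = a^2 * (B + 1) / B^2"
      using B0 by (simp add: t_def bB field_simps power2_eq_square)
    have p: "a^2 * (B + 1) / B^2 > 0" using a0 a_def B0 by (intro divide_pos_pos mult_pos_pos) auto
    show False using key[of t] m e p by (smt (verit))
  qed
  define r where "r = A *v v - l *\<^sub>R v"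
  have rV: "r \<in> V" using vV inv V by (simp add: r_def subspace_diff subspace_mul)
  have rv: "r \<bullet> v = 0" using vv by (simp add: r_def l_def inner_diff_left inner_diff_right inner_commute)
  have "r \<bullet> r = r \<bullet> (A *v v) - l * (r \<bullet> v)" by (simp add: r_def inner_diff_right)
  also have "\<dots> = 0" using orth[OF rV rv] rv by simp
  finally have "r = 0" by simp
  then have "A *v v = l *\<^sub>R v" by (simp add: r_def)
  moreover have "\<forall>x\<in>V. norm x = 1 \<longrightarrow> x \<bullet> (A *v x) \<le> l" using vmax l_def by auto
  ultimately show ?thesis using vV nv l_def by blast
qed

definition onset :: "(real^'n) set \<Rightarrow> bool" where
  "onset B \<longleftrightarrow> finite B \<and> (\<forall>b\<in>B. norm b = 1) \<and> (\<forall>b\<in>B. \<forall>c\<in>B. b \<noteq> c \<longrightarrow> b \<bullet> c = 0)"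

lemma onset_inner_sum:
  assumes "onset B" "b \<in> B" shows "b \<bullet> (\<Sum>c\<in>B. f c *\<^sub>R c) = f b"
proof -
  have fin: "finite B" and bb: "b \<bullet> b = 1" using assms by (auto simp: onset_def dot_square_norm)
  have "b \<bullet> (\<Sum>c\<in>B. f c *\<^sub>R c) = (\<Sum>c\<in>B. f c * (b \<bullet> c))" by (simp add: inner_sum_right)
  also have "\<dots> = (\<Sum>c\<in>B. if c = b then f c else 0)"
    using assms by (intro sum.cong) (auto simp: onset_def bb)
  also have "\<dots> = f b" using fin assms(2) by simp
  finally show ?thesis .
qed

lemma onset_expand:
  assumes "onset B" "x \<in> span B" shows "x = (\<Sum>b\<in>B. (b \<bullet> x) *\<^sub>R b)"
proof -
  have fin: "finite B" using assms by (simp add: onset_def)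
  obtain u where u: "x = (\<Sum>c\<in>B. u c *\<^sub>R c)" using assms(2) span_finite[OF fin] by auto
  have "\<forall>b\<in>B. b \<bullet> x = u b" using onset_inner_sum[OF assms(1)] u by simp
  then show ?thesis using u by (metis (no_types, lifting) sum.cong)
qed

lemma eigenbasis_sub:
  fixes A :: "real^'n^'n" assumes sym: "sym_mat A"
  shows "subspace V \<Longrightarrow> (\<forall>x\<in>V. A *v x \<in> V) \<Longrightarrow>
    \<exists>B. onset B \<and> B \<subseteq> V \<and> (\<forall>b\<in>B. A *v b = (b \<bullet> (A *v b)) *\<^sub>R b) \<and> span B = V"
proof (induction "dim V" arbitrary: V rule: less_induct)
  case less
  show ?case
  proof (cases "V = {0}")
    case True then show ?thesis by (intro exI[of _ "{}"]) (auto simp: onset_def)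
  next
    case False
    obtain v where vV: "v \<in> V" and nv: "norm v = 1" and ev: "A *v v = (v \<bullet> (A *v v)) *\<^sub>R v"
      using eig_max[OF sym less.prems False] by blast
    define V' where "V' = {x\<in>V. v \<bullet> x = 0}"
    have sV': "subspace V'" using less.prems(1) unfolding V'_def subspace_def
      by (auto simp: inner_add_right)
    have iV': "\<forall>x\<in>V'. A *v x \<in> V'"
    proof
      fix x assume x: "x \<in> V'"
      have "v \<bullet> (A *v x) = (A *v v) \<bullet> x" by (rule sym_inner[OF sym])
      also have "\<dots> = 0" using x by (subst ev) (simp add: V'_def)
      finally show "A *v x \<in> V'" using x less.prems(2) by (simp add: V'_def)
    qed
    have vv: "v \<bullet> v = 1" using nv by (simp add: dot_square_norm)
    have sub: "V' \<subseteq> V" by (auto simp: V'_def)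
    have "v \<notin> V'" using vv by (simp add: V'_def)
    then have ps: "V' \<subset> V" using vV sub by auto
    have e1: "span V' = V'" using sV' by (metis span_eq_iff)
    have e2: "span V = V" using less.prems(1) by (metis span_eq_iff)
    have "span V' \<subset> span V" using ps by (simp add: e1 e2)
    then have "dim V' < dim V" by (rule dim_psubset)
    then obtain B' where B': "onset B'" "B' \<subseteq> V'" "\<forall>b\<in>B'. A *v b = (b \<bullet> (A *v b)) *\<^sub>R b"
        "span B' = V'"
      using less.hyps sV' iV' by blast
    let ?B = "insert v B'"
    have "v \<notin> B'" using B'(2) \<open>v \<notin> V'\<close> by auto
    have on: "onset ?B" using B'(1,2) nv by (auto simp: onset_def V'_def inner_commute)
    have spB: "span ?B = V"
    proof
      show "span ?B \<subseteq> V" using less.prems(1) vV B'(2) sub by (intro span_minimal) auto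
      show "V \<subseteq> span ?B"
      proof
        fix x assume x: "x \<in> V"
        have "x - (v \<bullet> x) *\<^sub>R v \<in> V'" using x vV vv less.prems(1)
          by (simp add: V'_def subspace_diff subspace_mul inner_diff_right)
        then have "x - (v \<bullet> x) *\<^sub>R v \<in> span ?B" using B'(4) span_mono[of B' ?B] by auto
        moreover have "(v \<bullet> x) *\<^sub>R v \<in> span ?B" by (intro span_mul span_base) simp
        ultimately have "(x - (v \<bullet> x) *\<^sub>R v) + (v \<bullet> x) *\<^sub>R v \<in> span ?B" by (rule span_add)
        then show "x \<in> span ?B" by simp
      qed
    qed
    show ?thesis using on vV B' sub spB ev by (intro exI[of _ ?B]) auto
  qed
qed

lemma eigenbasis:
  fixes A :: "real^'n^'n" assumes "sym_mat A"
  obtains B where "onset B" "\<forall>b\<in>B. A *v b = (b \<bullet> (A *v b)) *\<^sub>R b" "span B = UNIV"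
  using eigenbasis_sub[OF assms subspace_UNIV] by auto

lemma sum_mvec: "(\<Sum>i\<in>I. M i) *v x = (\<Sum>i\<in>I. M i *v x)"
  by (induction I rule: infinite_finite_induct) (auto simp: matrix_vector_mult_add_rdistrib)

lemma mvec_sum: "M *v (\<Sum>i\<in>I. x i) = (\<Sum>i\<in>I. M *v x i)"
  by (induction I rule: infinite_finite_induct) (auto simp: matrix_vector_right_distrib)

lemma outer_mvec: "outer u v *v x = (v \<bullet> x) *\<^sub>R u"
  by (simp add: vec_eq_iff matrix_vector_mult_def outer_def inner_vec_def sum_distrib_left mult_ac)

lemma sym_outer_sum: "sym_mat (\<Sum>b\<in>B. c b *\<^sub>R outer b b)"
  unfolding sym_mat_def by (simp add: vec_eq_iff transpose_def sum_component outer_def mult.commute)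

lemma smvec[simp]: "(k *\<^sub>R A) *v v = k *\<^sub>R (A *v (v::real^'n))"
  by (rule scaleR_matrix_vector_assoc[symmetric])

lemma psd_sym: "psd_mat A \<Longrightarrow> sym_mat A" by (simp add: psd_mat_def)

lemma onset_inner_sum2:
  assumes "onset B" shows "x \<bullet> (\<Sum>c\<in>B. f c *\<^sub>R c) = (\<Sum>c\<in>B. f c * (x \<bullet> c))"
  by (simp add: inner_sum_right)

lemma eig_apply:
  assumes B: "onset B" "\<forall>b\<in>B. A *v b = (b \<bullet> (A *v b)) *\<^sub>R b" "span B = UNIV"
  shows "A *v x = (\<Sum>b\<in>B. ((b \<bullet> (A *v b)) * (b \<bullet> x)) *\<^sub>R b)"
proof -
  have "A *v x = A *v (\<Sum>b\<in>B. (b \<bullet> x) *\<^sub>R b)" using onset_expand[OF B(1)] B(3) by (metis UNIV_I)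
  also have "\<dots> = (\<Sum>b\<in>B. (b \<bullet> x) *\<^sub>R (A *v b))" by (simp add: mvec_sum matrix_vector_mult_scaleR)
  also have "\<dots> = (\<Sum>b\<in>B. ((b \<bullet> (A *v b)) * (b \<bullet> x)) *\<^sub>R b)"
  proof (intro sum.cong refl)
    fix b assume b: "b \<in> B"
    obtain m where m: "m = b \<bullet> (A *v b)" by blast
    have "A *v b = m *\<^sub>R b" using B(2) b m by blast
    then show "(b \<bullet> x) *\<^sub>R (A *v b) = ((b \<bullet> (A *v b)) * (b \<bullet> x)) *\<^sub>R b"
      unfolding m[symmetric] by (simp add: mult.commute)
  qed
  finally show ?thesis .
qed

lemma sqrt_exists:
  fixes A :: "real^'n^'n" assumes psd: "psd_mat A"
  shows "\<exists>S. psd_mat S \<and> S ** S = A"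
proof -
  obtain B where B: "onset B" "\<forall>b\<in>B. A *v b = (b \<bullet> (A *v b)) *\<^sub>R b" "span B = UNIV"
    using eigenbasis psd_sym[OF psd] by blast
  define l where "l b = b \<bullet> (A *v b)" for b
  have l0: "0 \<le> l b" for b using psd by (simp add: psd_mat_def l_def)
  define S where "S = (\<Sum>b\<in>B. sqrt (l b) *\<^sub>R outer b b)"
  have Sx: "S *v x = (\<Sum>b\<in>B. (sqrt (l b) * (b \<bullet> x)) *\<^sub>R b)" for x
    by (simp add: S_def sum_mvec outer_mvec)
  have Ax: "A *v x = (\<Sum>b\<in>B. (l b * (b \<bullet> x)) *\<^sub>R b)" for x
    unfolding l_def by (rule eig_apply[OF B])
  have "psd_mat S"
    unfolding psd_mat_def
  proof (intro conjI allI)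
    show "sym_mat S" unfolding S_def by (rule sym_outer_sum)
    fix x
    have "x \<bullet> (S *v x) = (\<Sum>b\<in>B. sqrt (l b) * (b \<bullet> x) * (x \<bullet> b))" by (simp add: Sx inner_sum_right)
    also have "\<dots> \<ge> 0" using l0 by (intro sum_nonneg) (simp add: inner_commute mult.assoc)
    finally show "0 \<le> x \<bullet> (S *v x)" .
  qed
  moreover have "S ** S = A"
  proof (subst matrix_eq, intro allI)
    fix x
    have "(S ** S) *v x = S *v (S *v x)" by (simp add: matrix_vector_mul_assoc)
    also have "\<dots> = (\<Sum>b\<in>B. (sqrt (l b) * (b \<bullet> (S *v x))) *\<^sub>R b)" by (rule Sx)
    also have "\<dots> = (\<Sum>b\<in>B. (l b * (b \<bullet> x)) *\<^sub>R b)"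
    proof (intro sum.cong refl)
      fix b assume b: "b \<in> B"
      have "b \<bullet> (S *v x) = sqrt (l b) * (b \<bullet> x)" unfolding Sx by (rule onset_inner_sum[OF B(1) b])
      then show "(sqrt (l b) * (b \<bullet> (S *v x))) *\<^sub>R b = (l b * (b \<bullet> x)) *\<^sub>R b"
        using l0[of b] by (simp add: mult.assoc[symmetric])
    qed
    also have "\<dots> = A *v x" by (simp add: Ax)
    finally show "(S ** S) *v x = A *v x" .
  qed
  ultimately show ?thesis by blast
qed

lemma sqrt_unique:
  fixes S T :: "real^'n^'n" assumes S: "psd_mat S" and T: "psd_mat T" and eq: "S ** S = T ** T"
  shows "S = T"
proof -
  obtain B where B: "onset B" "\<forall>b\<in>B. S *v b = (b \<bullet> (S *v b)) *\<^sub>R b" "span B = UNIV"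
    using eigenbasis psd_sym[OF S] by blast
  have Tb: "T *v b = (b \<bullet> (S *v b)) *\<^sub>R b" if b: "b \<in> B" for b
  proof -
    define m where "m = b \<bullet> (S *v b)"
    have m0: "0 \<le> m" using S by (simp add: psd_mat_def m_def)
    have Sb: "S *v b = m *\<^sub>R b" using B(2) b m_def by blast
    have TT: "T *v (T *v b) = (m * m) *\<^sub>R b"
    proof -
      have "T *v (T *v b) = S *v (S *v b)" by (simp add: matrix_vector_mul_assoc eq)
      also have "\<dots> = (m*m) *\<^sub>R b" by (simp add: Sb matrix_vector_mult_scaleR)
      finally show ?thesis .
    qed
    show ?thesis
    proof (cases "m = 0")
      case True
      have "(T *v b) \<bullet> (T *v b) = b \<bullet> (T *v (T *v b))" using sym_inner[OF psd_sym[OF T], of b "T *v b"] by simp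
      also have "\<dots> = 0" using TT True by simp
      finally show ?thesis using True by (simp add: m_def[symmetric])
    next
      case False
      then have mp: "m > 0" using m0 by simp
      define y where "y = T *v b - m *\<^sub>R b"
      have "T *v y + m *\<^sub>R y = 0"
        by (simp add: y_def TT matrix_vector_mult_diff_distrib matrix_vector_mult_scaleR algebra_simps)
      then have "y \<bullet> (T *v y) + m * (y \<bullet> y) = 0"
        by (metis inner_add_right inner_scaleR_right inner_zero_right)
      moreover have "0 \<le> y \<bullet> (T *v y)" using T by (simp add: psd_mat_def)
      ultimately have "m * (y \<bullet> y) \<le> 0" by linarith
      then have "y \<bullet> y \<le> 0" using mp by (simp add: mult_le_0_iff)
      then have "y \<bullet> y = 0" using inner_ge_zero[of y] by linarith
      then have "y = 0" by simp
      then show ?thesis by (simp add: y_def m_def)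
    qed
  qed
  show ?thesis
  proof (subst matrix_eq, intro allI)
    fix x
    have "S *v x = (\<Sum>b\<in>B. ((b \<bullet> (S *v b)) * (b \<bullet> x)) *\<^sub>R b)" by (rule eig_apply[OF B])
    also have "\<dots> = T *v x"
    proof -
      have B2: "\<forall>b\<in>B. T *v b = (b \<bullet> (T *v b)) *\<^sub>R b" using Tb B(1)
        by (auto simp: onset_def dot_square_norm)
      have "T *v x = (\<Sum>b\<in>B. ((b \<bullet> (T *v b)) * (b \<bullet> x)) *\<^sub>R b)" by (rule eig_apply[OF B(1) B2 B(3)])
      also have "\<dots> = (\<Sum>b\<in>B. ((b \<bullet> (S *v b)) * (b \<bullet> x)) *\<^sub>R b)"
        using Tb B(1) by (intro sum.cong refl) (auto simp: onset_def dot_square_norm)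
      finally show ?thesis by simp
    qed
    finally show "S *v x = T *v x" .
  qed
qed

lemma msqrt_prop:
  assumes "psd_mat A" shows "psd_mat (msqrt A) \<and> msqrt A ** msqrt A = A"
proof -
  obtain S where S: "psd_mat S" "S ** S = A" using sqrt_exists[OF assms] by blast
  have ex: "\<exists>!S. psd_mat S \<and> S ** S = A"
  proof (rule ex1I[of _ S])
    show "psd_mat S \<and> S ** S = A" using S by simp
    fix T assume "psd_mat T \<and> T ** T = A"
    then show "T = S" using sqrt_unique[of T S] S by simp
  qed
  show ?thesis unfolding msqrt_def by (rule theI'[OF ex])
qed

lemma msqrt_eq:
  assumes S: "psd_mat S" and SA: "S ** S = A" shows "msqrt A = S"
proof -
  have "psd_mat A" 
  proof -
    have "x \<bullet> (A *v x) = (S *v x) \<bullet> (S *v x)" for x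
    proof -
      have "x \<bullet> (A *v x) = x \<bullet> (S *v (S *v x))" by (simp add: SA[symmetric] matrix_vector_mul_assoc)
      also have "\<dots> = (S *v x) \<bullet> (S *v x)" by (rule sym_inner[OF psd_sym[OF S]])
      finally show ?thesis .
    qed
    moreover have "transpose A = A" using psd_sym[OF S] unfolding SA[symmetric] sym_mat_def
      by (simp add: matrix_transpose_mul)
    ultimately show ?thesis by (simp add: psd_mat_def sym_mat_def)
  qed
  from msqrt_prop[OF this] have "psd_mat (msqrt A)" "msqrt A ** msqrt A = S ** S" using SA by auto
  then show ?thesis using sqrt_unique[OF _ S] by blast
qed



lemma sym_mat_iff: "sym_mat A \<longleftrightarrow> (\<forall>i j. A$j$i = A$i$j)"
  by (auto simp: sym_mat_def transpose_def vec_eq_iff)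

lemma sym_diff: "sym_mat S \<Longrightarrow> sym_mat T \<Longrightarrow> sym_mat (S - T)"
  by (simp add: sym_mat_iff)

lemma inner_shift: "(q + m *\<^sub>R v) \<bullet> (q + m *\<^sub>R v) - q \<bullet> q = 2 * m * (v \<bullet> q) + m^2 * (v \<bullet> (v::'a::real_inner))"
  by (simp add: inner_add_left inner_add_right inner_commute[of q v] power2_eq_square algebra_simps)

lemma half_bound:
  fixes A B :: "real^'n^'n"
  assumes A: "psd_mat A" and B: "psd_mat B" and x: "norm x = 1"
  shows "x \<bullet> ((msqrt A - msqrt B) *v x) \<le> sqrt (l1m (A - B))"
proof -
  define S where "S = msqrt A"
  define T where "T = msqrt B"
  have S: "psd_mat S" "S ** S = A" using msqrt_prop[OF A] by (auto simp: S_def)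
  have T: "psd_mat T" "T ** T = B" using msqrt_prop[OF B] by (auto simp: T_def)
  define D where "D = S - T"
  have sD: "sym_mat D" unfolding D_def by (intro sym_diff psd_sym S T)
  obtain v where nv: "norm v = 1" and ev: "D *v v = (v \<bullet> (D *v v)) *\<^sub>R v"
     and vmax: "\<forall>z. norm z = 1 \<longrightarrow> z \<bullet> (D *v z) \<le> v \<bullet> (D *v v)"
    using eig_max[OF sD subspace_UNIV] by auto
  define m where "m = v \<bullet> (D *v v)"
  have xm: "x \<bullet> (D *v x) \<le> m" using vmax x m_def by blast
  have "m \<le> sqrt (l1m (A - B))"
  proof (cases "m \<le> 0")
    case True then show ?thesis using l1m_nonneg[of "A - B"] by (meson order_trans real_sqrt_ge_zero)
  next
    case False
    have vv: "v \<bullet> v = 1" using nv by (simp add: dot_square_norm)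
    have "D *v v = m *\<^sub>R v" unfolding m_def by (rule ev)
    then have "S *v v - T *v v = m *\<^sub>R v" by (simp add: D_def matrix_vector_mult_diff_rdistrib)
    then have pq: "S *v v = T *v v + m *\<^sub>R v" by (metis add.commute diff_eq_eq)
    have e1: "v \<bullet> (A *v v) = (S *v v) \<bullet> (S *v v)"
      using sym_inner[OF psd_sym[OF S(1)], of v "S *v v"] by (simp add: S(2)[symmetric] matrix_vector_mul_assoc)
    have e2: "v \<bullet> (B *v v) = (T *v v) \<bullet> (T *v v)"
      using sym_inner[OF psd_sym[OF T(1)], of v "T *v v"] by (simp add: T(2)[symmetric] matrix_vector_mul_assoc)
    have "v \<bullet> ((A - B) *v v) = 2 * m * (v \<bullet> (T *v v)) + m^2"
      unfolding matrix_vector_mult_diff_rdistrib inner_diff_right e1 e2 pq inner_shift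
      using vv by simp
    moreover have "0 \<le> v \<bullet> (T *v v)" using T(1) by (simp add: psd_mat_def)
    ultimately have "m^2 \<le> v \<bullet> ((A - B) *v v)" using False by simp
    also have "\<dots> \<le> l1m (A - B)" using quad_l1[of v "A - B"] nv by simp
    finally show ?thesis using False by (simp add: real_le_rsqrt)
  qed
  then show ?thesis using xm by (simp add: D_def S_def T_def)
qed

lemma l1m_minus: "l1m (A - B) = l1m (B - A)"
  unfolding l1m_def by (simp add: abs_minus_commute)

lemma abs_bound:
  fixes A B :: "real^'n^'n"
  assumes A: "psd_mat A" and B: "psd_mat B"
  shows "\<bar>x \<bullet> ((msqrt A - msqrt B) *v x)\<bar> \<le> sqrt (l1m (A - B)) * (norm x)^2"
proof (cases "x = 0")
  case True then show ?thesis by simp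
next
  case False
  let ?u = "x /\<^sub>R norm x"
  have nu: "norm ?u = 1" using False by simp
  have h1: "?u \<bullet> ((msqrt A - msqrt B) *v ?u) \<le> sqrt (l1m (A - B))" by (rule half_bound[OF A B nu])
  have h2: "?u \<bullet> ((msqrt B - msqrt A) *v ?u) \<le> sqrt (l1m (A - B))"
    using half_bound[OF B A nu] by (simp add: l1m_minus)
  have "(msqrt B - msqrt A) *v ?u = - ((msqrt A - msqrt B) *v ?u)"
    by (simp add: matrix_vector_mult_diff_rdistrib)
  then have "\<bar>?u \<bullet> ((msqrt A - msqrt B) *v ?u)\<bar> \<le> sqrt (l1m (A - B))" using h1 h2 by auto
  moreover have "?u \<bullet> ((msqrt A - msqrt B) *v ?u) = (x \<bullet> ((msqrt A - msqrt B) *v x)) / (norm x)^2"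
    by (simp add: matrix_vector_mult_scaleR power2_eq_square divide_inverse mult_ac)
  ultimately show ?thesis using False by (simp add: divide_le_eq abs_div)
qed

lemma entry_bound:
  fixes D :: "real^'n^'n"
  assumes sD: "sym_mat D" and q: "\<And>x. \<bar>x \<bullet> (D *v x)\<bar> \<le> s * (norm x)^2"
  shows "\<bar>D$i$j\<bar> \<le> 2 * s"
proof -
  let ?ei = "axis i (1::real)" and ?ej = "axis j (1::real)"
  have Dij: "?ei \<bullet> (D *v ?ej) = D$i$j"
    by (simp add: inner_axis' matrix_vector_mult_basis column_def)
  have Dji: "?ej \<bullet> (D *v ?ei) = D$i$j"
    using sym_inner[OF sD, of ?ej ?ei] Dij by (simp add: inner_commute)
  have pol: "(?ei + ?ej) \<bullet> (D *v (?ei + ?ej)) - (?ei - ?ej) \<bullet> (D *v (?ei - ?ej)) = 4 * D$i$j"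
    by (simp add: matrix_vector_right_distrib matrix_vector_mult_diff_distrib inner_add_left inner_add_right
        inner_diff_left inner_diff_right Dij Dji)
  have n1: "(norm (?ei + ?ej))^2 \<le> 4"
  proof -
    have "norm (?ei + ?ej) \<le> 2" using norm_triangle_ineq[of ?ei ?ej] by simp
    then show ?thesis by (metis norm_ge_zero power_mono power2_eq_square real_sqrt_four real_sqrt_pow2 zero_le_numeral)
  qed
  have n2: "(norm (?ei - ?ej))^2 \<le> 4"
  proof -
    have "norm (?ei - ?ej) \<le> 2" using norm_triangle_ineq4[of ?ei ?ej] by simp
    then show ?thesis by (metis norm_ge_zero power_mono power2_eq_square real_sqrt_four real_sqrt_pow2 zero_le_numeral)
  qed
  have s0: "0 \<le> s" using q[of ?ei] abs_ge_zero[of "?ei \<bullet> (D *v ?ei)"] by simp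
  have a1: "\<bar>(?ei + ?ej) \<bullet> (D *v (?ei + ?ej))\<bar> \<le> 4 * s"
    using q[of "?ei + ?ej"] mult_left_mono[OF n1 s0] by linarith
  have a2: "\<bar>(?ei - ?ej) \<bullet> (D *v (?ei - ?ej))\<bar> \<le> 4 * s"
    using q[of "?ei - ?ej"] mult_left_mono[OF n2 s0] by linarith
  show ?thesis using pol a1 a2 by linarith
qed

lemma norm_mat_bound:
  fixes D :: "real^'n^'n"
  assumes "\<And>i j. \<bar>D$i$j\<bar> \<le> K"
  shows "norm D \<le> real (CARD('n))^2 * K"
proof -
  have "norm D = L2_set (\<lambda>i. norm (D$i)) UNIV" by (rule norm_vec_def)
  also have "\<dots> \<le> (\<Sum>i\<in>UNIV. norm (D$i))" by (rule L2_set_le_sum) simp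
  also have "\<dots> \<le> (\<Sum>i\<in>UNIV. \<Sum>j\<in>UNIV. \<bar>D$i$j\<bar>)" by (rule sum_mono) (rule norm_le_l1_cart)
  also have "\<dots> \<le> (\<Sum>i\<in>(UNIV::'n set). \<Sum>j\<in>(UNIV::'n set). K)"
    by (rule sum_mono, rule sum_mono, rule assms)
  also have "\<dots> = real (CARD('n))^2 * K" by (simp add: power2_eq_square)
  finally show ?thesis .
qed

lemma l1m_le: "l1m (M::real^'n^'n) \<le> real (CARD('n))^2 * norm M"
proof -
  have "l1m M \<le> (\<Sum>i\<in>(UNIV::'n set). \<Sum>j\<in>(UNIV::'n set). norm M)"
    unfolding l1m_def
    by (rule sum_mono, rule sum_mono, rule order_trans[OF component_le_norm_cart Finite_Cartesian_Product.norm_nth_le])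
  also have "\<dots> = real (CARD('n))^2 * norm M" by (simp add: power2_eq_square)
  finally show ?thesis .
qed

lemma msqrt_lip:
  fixes A B :: "real^'n^'n"
  assumes A: "psd_mat A" and B: "psd_mat B"
  shows "norm (msqrt A - msqrt B) \<le> 2 * real (CARD('n))^2 * sqrt (real (CARD('n))^2 * norm (A - B))"
proof -
  have sD: "sym_mat (msqrt A - msqrt B)"
    using msqrt_prop[OF A] msqrt_prop[OF B] by (intro sym_diff psd_sym) auto
  have "\<bar>(msqrt A - msqrt B)$i$j\<bar> \<le> 2 * sqrt (l1m (A - B))" for i j
    by (rule entry_bound[OF sD abs_bound[OF A B]])
  then have "norm (msqrt A - msqrt B) \<le> real (CARD('n))^2 * (2 * sqrt (l1m (A - B)))"
    by (rule norm_mat_bound)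
  also have "\<dots> \<le> real (CARD('n))^2 * (2 * sqrt (real (CARD('n))^2 * norm (A - B)))"
    using l1m_le[of "A - B"] by (intro mult_left_mono) auto
  finally show ?thesis by simp
qed

lemma msqrt_cont: "continuous_on {A::real^'n^'n. psd_mat A} msqrt"
  unfolding continuous_on_iff
proof (intro ballI allI impI)
  fix A :: "real^'n^'n" and e :: real
  assume A: "A \<in> {A. psd_mat A}" and e: "0 < e"
  define n where "n = real (CARD('n))"
  define c where "c = (2 * n^2)^2 * n^2"
  have c0: "0 \<le> c" by (simp add: c_def)
  define d where "d = e^2 / (c + 1)"
  have d0: "0 < d" using e c0 by (simp add: d_def)
  show "\<exists>d>0. \<forall>x'\<in>{A. psd_mat A}. dist x' A < d \<longrightarrow> dist (msqrt x') (msqrt A) < e"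
  proof (intro exI[of _ d] conjI ballI impI d0)
    fix X assume X: "X \<in> {A. psd_mat A}" and dX: "dist X A < d"
    have n0: "0 \<le> n" by (simp add: n_def)
    have "dist (msqrt X) (msqrt A) \<le> 2 * n^2 * sqrt (n^2 * dist X A)"
      using msqrt_lip[of X A] X A by (simp add: dist_norm n_def)
    also have "\<dots> = sqrt (c * dist X A)"
    proof -
      have "sqrt (c * dist X A) = sqrt ((2*n^2)^2) * sqrt (n^2 * dist X A)"
        by (simp only: c_def mult.assoc real_sqrt_mult)
      also have "sqrt ((2*n^2)^2) = 2*n^2" by (subst real_sqrt_abs) simp
      finally show ?thesis by simp
    qed
    also have "\<dots> < e"
    proof -
      have "c * dist X A \<le> c * d" using dX c0 by (intro mult_left_mono) auto
      also have "\<dots> < e^2" using e c0 by (simp add: d_def field_simps power2_eq_square)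
      finally show ?thesis using e by (simp add: real_sqrt_less_iff real_less_lsqrt) 
    qed
    finally show "dist (msqrt X) (msqrt A) < e" .
  qed
qed



lemma cont_mmult:
  fixes f g :: "'a::topological_space \<Rightarrow> real^'n^'n"
  shows "continuous_on S f \<Longrightarrow> continuous_on S g \<Longrightarrow> continuous_on S (\<lambda>X. f X ** g X)"
  unfolding matrix_matrix_mult_def by (intro continuous_intros)

lemma cont_form: "continuous_on UNIV (\<lambda>X::real^'n^'n. x \<bullet> (X *v x))"
  unfolding matrix_vector_mult_def by (intro continuous_intros)

lemma neg_mvec: "(- M) *v x = - (M *v (x::real^'n))"
  by (simp add: matrix_vector_mult_def vec_eq_iff sum_negf)

lemma scale_form:
  fixes A :: "real^'n^'n"
  assumes "\<forall>z. norm z = 1 \<longrightarrow> z \<bullet> (A *v z) \<le> \<mu>"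
  shows "x \<bullet> (A *v x) \<le> \<mu> * (x \<bullet> x)"
proof (cases "x = 0")
  case True then show ?thesis by simp
next
  case False
  let ?u = "x /\<^sub>R norm x"
  have nu: "norm ?u = 1" using False by simp
  have "?u \<bullet> (A *v ?u) \<le> \<mu>" using assms nu by blast
  moreover have "?u \<bullet> (A *v ?u) = (x \<bullet> (A *v x)) / (x \<bullet> x)"
    by (simp add: matrix_vector_mult_scaleR dot_square_norm power2_eq_square divide_inverse mult_ac)
  ultimately show ?thesis using False by (simp add: divide_le_eq)
qed

lemma sqrt_form_bounds:
  fixes M :: "real^'n^'n"
  assumes M: "psd_mat M" and a0: "0 \<le> a"
    and lo: "\<And>x. a * (x \<bullet> x) \<le> x \<bullet> (M *v x)" and hi: "\<And>x. x \<bullet> (M *v x) \<le> b * (x \<bullet> x)"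
  shows "sqrt a * (x \<bullet> x) \<le> x \<bullet> (msqrt M *v x) \<and> x \<bullet> (msqrt M *v x) \<le> sqrt b * (x \<bullet> x)"
proof -
  define S where "S = msqrt M"
  have S: "psd_mat S" "S ** S = M" using msqrt_prop[OF M] by (auto simp: S_def)
  have sS: "sym_mat S" using S psd_sym by blast
  have MS: "y \<bullet> (M *v y) = (S *v y) \<bullet> (S *v y)" for y
    using sym_inner[OF sS, of y "S *v y"] by (simp add: S(2)[symmetric] matrix_vector_mul_assoc)
  obtain v where nv: "norm v = 1" and ev: "S *v v = (v \<bullet> (S *v v)) *\<^sub>R v"
     and vmax: "\<forall>z. norm z = 1 \<longrightarrow> z \<bullet> (S *v z) \<le> v \<bullet> (S *v v)"
    using eig_max[OF sS subspace_UNIV] by auto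
  define \<mu> where "\<mu> = v \<bullet> (S *v v)"
  have vv: "v \<bullet> v = 1" using nv by (simp add: dot_square_norm)
  have Sv: "S *v v = \<mu> *\<^sub>R v" unfolding \<mu>_def by (rule ev)
  have "\<mu> * \<mu> = v \<bullet> (M *v v)" unfolding MS Sv using vv by simp
  also have "\<dots> \<le> b" using hi[of v] vv by simp
  finally have "\<mu>^2 \<le> b" by (simp add: power2_eq_square)
  moreover have "0 \<le> \<mu>" using S(1) by (simp add: psd_mat_def \<mu>_def)
  ultimately have "\<mu> \<le> sqrt b" by (simp add: real_le_rsqrt)
  moreover have "x \<bullet> (S *v x) \<le> \<mu> * (x \<bullet> x)" by (rule scale_form) (use vmax \<mu>_def in auto)
  moreover have "0 \<le> x \<bullet> x" by simp
  ultimately have up: "x \<bullet> (S *v x) \<le> sqrt b * (x \<bullet> x)" by (meson mult_right_mono order_trans)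
  have snS: "sym_mat (- S)" using sS by (simp add: sym_mat_iff)
  obtain w where nw: "norm w = 1" and ew: "(- S) *v w = (w \<bullet> ((- S) *v w)) *\<^sub>R w"
     and wmax: "\<forall>z. norm z = 1 \<longrightarrow> z \<bullet> ((- S) *v z) \<le> w \<bullet> ((- S) *v w)"
    using eig_max[OF snS subspace_UNIV] by auto
  define \<nu> where "\<nu> = w \<bullet> (S *v w)"
  have ww: "w \<bullet> w = 1" using nw by (simp add: dot_square_norm)
  have "(- S) *v w = (- \<nu>) *\<^sub>R w" using ew by (simp add: \<nu>_def neg_mvec)
  then have Sw: "S *v w = \<nu> *\<^sub>R w" by (simp add: neg_mvec)
  have "a \<le> w \<bullet> (M *v w)" using lo[of w] ww by simp
  also have "w \<bullet> (M *v w) = \<nu> * \<nu>" unfolding MS Sw using ww by simp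
  finally have "a \<le> \<nu>^2" by (simp add: power2_eq_square)
  moreover have "0 \<le> \<nu>" using S(1) by (simp add: psd_mat_def \<nu>_def)
  ultimately have "sqrt a \<le> \<nu>"
    using real_sqrt_le_mono[of a "\<nu>^2"] by simp
  moreover have "x \<bullet> ((- S) *v x) \<le> (- \<nu>) * (x \<bullet> x)"
    by (rule scale_form) (use wmax \<nu>_def in \<open>auto simp: neg_mvec\<close>)
  then have "\<nu> * (x \<bullet> x) \<le> x \<bullet> (S *v x)" by (simp add: neg_mvec)
  moreover have "0 \<le> x \<bullet> x" by simp
  ultimately have "sqrt a * (x \<bullet> x) \<le> x \<bullet> (S *v x)" by (meson mult_right_mono order_trans)
  then show ?thesis using up by (simp add: S_def)
qed

lemma inner_RCR:
  assumes "psd_mat R" shows "x \<bullet> ((R ** C ** R) *v x) = (R *v x) \<bullet> (C *v (R *v x))"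
proof -
  have "(R ** C ** R) *v x = R *v (C *v (R *v x))" by (simp add: matrix_vector_mul_assoc matrix_mul_assoc)
  then show ?thesis using sym_inner[OF psd_sym[OF assms], of x "C *v (R *v x)"] by simp
qed

lemma sym_RCR: "sym_mat R \<Longrightarrow> sym_mat C \<Longrightarrow> sym_mat (R ** C ** R)"
  unfolding sym_mat_def by (simp add: matrix_transpose_mul matrix_mul_assoc)

lemma sym_mat1: "sym_mat (mat k)" by (simp add: sym_mat_def)

lemma sym_add: "sym_mat A \<Longrightarrow> sym_mat B \<Longrightarrow> sym_mat (A + B)" by (simp add: sym_mat_iff)
lemma sym_scale: "sym_mat A \<Longrightarrow> sym_mat (c *\<^sub>R A)" by (simp add: sym_mat_iff)
lemma sym_neg: "sym_mat A \<Longrightarrow> sym_mat (- A)" by (simp add: sym_mat_iff)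
lemma sym_sum: "(\<And>i. i \<in> I \<Longrightarrow> sym_mat (M i)) \<Longrightarrow> sym_mat (\<Sum>i\<in>I. M i)"
  by (simp add: sym_mat_iff sum_component)

lemma RR_form: "psd_mat R \<Longrightarrow> R ** R = X \<Longrightarrow> x \<bullet> (X *v x) = (R *v x) \<bullet> (R *v x)"
  using sym_inner[OF psd_sym, of R x "R *v x"] by (simp add: matrix_vector_mul_assoc)

lemma part1:
  fixes eps :: real and N :: nat and w :: "nat \<Rightarrow> real" and C :: "nat \<Rightarrow> real^'n^'n"
  assumes eps_pos: "0 < eps"
    and w_pos: "\<And>i. i \<in> {1..N} \<Longrightarrow> 0 < w i"
    and w_sum: "(\<Sum>i\<in>{1..N}. w i) = 1"
    and C_psd: "\<And>i. i \<in> {1..N} \<Longrightarrow> psd_mat (C i)"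
    and al: "0 < \<alpha>" and Cal: "\<forall>i\<in>{1..N}. loewner_ge (C i) (\<alpha> *\<^sub>R mat 1)" and ea: "eps < 2 * \<alpha>"
  shows "\<exists>X. pd_mat X \<and> Gmap eps N w C X = X"
proof -
  define c where "c = (4/eps)^2"
  have c0: "0 < c" using eps_pos by (simp add: c_def)
  have Clo: "\<alpha> * (x \<bullet> x) \<le> x \<bullet> (C i *v x)" if "i \<in> {1..N}" for i x
  proof -
    have "0 \<le> x \<bullet> ((C i - \<alpha> *\<^sub>R mat 1) *v x)" using Cal that by (simp add: loewner_ge_def psd_mat_def)
    then show ?thesis by (simp add: matrix_vector_mult_diff_rdistrib inner_diff_right)
  qed
  define K where "K = (\<Sum>i\<in>{1..N}. l1m (C i))"
  have K0: "0 \<le> K" unfolding K_def by (intro sum_nonneg l1m_nonneg)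
  have Chi: "x \<bullet> (C i *v x) \<le> K * (x \<bullet> x)" if "i \<in> {1..N}" for i x
  proof -
    have "l1m (C i) \<le> K" unfolding K_def using that by (intro member_le_sum l1m_nonneg) auto
    then have "l1m (C i) * (norm x)^2 \<le> K * (norm x)^2" by (intro mult_right_mono) auto
    then show ?thesis using quad_l1[of x "C i"] by (simp add: power2_norm_eq_inner)
  qed
  define \<beta> where "\<beta> = \<alpha> - eps/2"
  define \<gamma> where "\<gamma> = K + \<beta>"
  have b0: "0 < \<beta>" using ea by (simp add: \<beta>_def)
  have bg: "\<beta> \<le> \<gamma>" using K0 by (simp add: \<gamma>_def)
  have Kg: "K \<le> \<gamma>" using b0 by (simp add: \<gamma>_def)
  define SS where "SS = {X::real^'n^'n. sym_mat X \<and> (\<forall>x. \<beta> * (x \<bullet> x) \<le> x \<bullet> (X *v x))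
                                          \<and> (\<forall>x. x \<bullet> (X *v x) \<le> \<gamma> * (x \<bullet> x))}"
  have SSpsd: "psd_mat X" if "X \<in> SS" for X
  proof -
    have "0 \<le> \<beta> * (x\<bullet>x)" for x using b0 by simp
    then show ?thesis using that by (auto simp: SS_def psd_mat_def intro: order_trans)
  qed
  define h where "h i X = mat 1 + c *\<^sub>R (msqrt X ** C i ** msqrt X)" for i X
  have hb: "psd_mat (h i X) \<and> (\<forall>x. (1 + c*(\<alpha>*\<beta>)) * (x \<bullet> x) \<le> x \<bullet> (h i X *v x)
               \<and> x \<bullet> (h i X *v x) \<le> (1 + c*(K*\<gamma>)) * (x \<bullet> x))"
    if X: "X \<in> SS" and i: "i \<in> {1..N}" for X i
  proof -
    define R where "R = msqrt X"
    have R: "psd_mat R" "R ** R = X" using msqrt_prop[OF SSpsd[OF X]] by (auto simp: R_def)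
    have hx: "x \<bullet> (h i X *v x) = x \<bullet> x + c * ((R *v x) \<bullet> (C i *v (R *v x)))" for x
      by (simp add: h_def R_def[symmetric] matrix_vector_mult_add_rdistrib inner_add_right inner_RCR[OF R(1)])
    have XR: "x \<bullet> (X *v x) = (R *v x) \<bullet> (R *v x)" for x by (rule RR_form[OF R])
    have bnd: "\<alpha>*\<beta> * (x \<bullet> x) \<le> (R *v x) \<bullet> (C i *v (R *v x)) \<and> (R *v x) \<bullet> (C i *v (R *v x)) \<le> K*\<gamma> * (x \<bullet> x)" for x
    proof -
      have "\<beta> * (x \<bullet> x) \<le> (R *v x) \<bullet> (R *v x)" "(R *v x) \<bullet> (R *v x) \<le> \<gamma> * (x \<bullet> x)"
        using X XR by (auto simp: SS_def)
      moreover have "\<alpha> * ((R *v x) \<bullet> (R *v x)) \<le> (R *v x) \<bullet> (C i *v (R *v x))" by (rule Clo[OF i])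
      moreover have "(R *v x) \<bullet> (C i *v (R *v x)) \<le> K * ((R *v x) \<bullet> (R *v x))" by (rule Chi[OF i])
      moreover have "\<alpha> * (\<beta> * (x \<bullet> x)) \<le> \<alpha> * ((R *v x) \<bullet> (R *v x))"
        using calculation(1) al by (intro mult_left_mono) auto
      moreover have "K * ((R *v x) \<bullet> (R *v x)) \<le> K * (\<gamma> * (x \<bullet> x))"
        using calculation(2) K0 by (intro mult_left_mono) auto
      ultimately show ?thesis by (simp add: mult.assoc)
    qed
    have psdh: "psd_mat (h i X)"
      unfolding psd_mat_def
    proof (intro conjI allI)
      show "sym_mat (h i X)" unfolding h_def
        using R(1) by (intro sym_add sym_mat1 sym_scale sym_RCR psd_sym[OF C_psd[OF i]]) (simp_all add: R_def psd_sym)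
      fix x :: "real^'n"
      have "0 \<le> \<alpha>*\<beta> * (x \<bullet> x)" using al b0 by simp
      then have "0 \<le> (R *v x) \<bullet> (C i *v (R *v x))" using bnd[of x] by linarith
      then show "0 \<le> x \<bullet> (h i X *v x)" unfolding hx using c0 by simp
    qed
    show ?thesis
    proof (intro conjI allI psdh)
      fix x :: "real^'n"
      show "(1 + c*(\<alpha>*\<beta>)) * (x \<bullet> x) \<le> x \<bullet> (h i X *v x)"
        unfolding hx using mult_left_mono[OF conjunct1[OF bnd[of x]], of c] c0
        by (simp add: algebra_simps)
      show "x \<bullet> (h i X *v x) \<le> (1 + c*(K*\<gamma>)) * (x \<bullet> x)"
        unfolding hx using mult_left_mono[OF conjunct2[OF bnd[of x]], of c] c0
        by (simp add: algebra_simps)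
    qed
  qed
  define G where "G = Gmap eps N w C"
  have Geq: "G X = (eps/4) *\<^sub>R (\<Sum>i\<in>{1..N}. w i *\<^sub>R (- mat 1 + msqrt (h i X)))" for X
    by (simp add: G_def Gmap_def h_def c_def)
  have Gform: "x \<bullet> (G X *v x) = eps/4 * (\<Sum>i\<in>{1..N}. w i * (- (x \<bullet> x) + x \<bullet> (msqrt (h i X) *v x)))" for X x
    unfolding Geq by (simp add: sum_mvec matrix_vector_mult_add_rdistrib matrix_vector_mult_diff_rdistrib neg_mvec inner_sum_right inner_add_right inner_diff_right)
  define L where "L = sqrt (1 + c*(\<alpha>*\<beta>))"
  define U where "U = sqrt (1 + c*(K*\<gamma>))"
  have Lb: "\<beta> \<le> eps/4 * (L - 1)"
  proof -
    have a: "\<alpha> = \<beta> + eps/2" by (simp add: \<beta>_def)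
    have "(1 + 4*\<beta>/eps)^2 = 1 + c*(\<alpha>*\<beta>)" unfolding a c_def using eps_pos
      by (simp add: field_simps power2_eq_square)
    then have "L = 1 + 4*\<beta>/eps" unfolding L_def using b0 eps_pos
      by (metis real_sqrt_abs abs_of_nonneg add_nonneg_nonneg divide_nonneg_pos less_imp_le mult_nonneg_nonneg zero_le_numeral zero_le_one)
    then show ?thesis using eps_pos by simp
  qed
  have Ub: "eps/4 * (U - 1) \<le> \<gamma>"
  proof -
    have g0: "0 \<le> \<gamma>" using b0 bg by simp
    have "c*(K*\<gamma>) \<le> c*(\<gamma>*\<gamma>)" using Kg g0 c0 by (intro mult_left_mono mult_right_mono) auto
    moreover have e: "(1 + 4*\<gamma>/eps)^2 = 1 + 8*\<gamma>/eps + c*(\<gamma>*\<gamma>)" unfolding c_def using eps_pos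
      by (simp add: field_simps power2_eq_square)
    moreover have "0 \<le> 8*\<gamma>/eps" using g0 eps_pos by simp
    ultimately have "1 + c*(K*\<gamma>) \<le> (1 + 4*\<gamma>/eps)^2" by linarith
    then have "U \<le> sqrt ((1 + 4*\<gamma>/eps)^2)" unfolding U_def by (rule real_sqrt_le_mono)
    also have "\<dots> = 1 + 4*\<gamma>/eps" using g0 eps_pos by simp
    finally show ?thesis using eps_pos by (simp add: field_simps)
  qed
  have w0: "\<forall>i\<in>{1..N}. 0 \<le> w i" using w_pos less_imp_le by blast
  have Ginto: "G X \<in> SS" if X: "X \<in> SS" for X
  proof -
    have sq: "i \<in> {1..N} \<Longrightarrow> L * (x \<bullet> x) \<le> x \<bullet> (msqrt (h i X) *v x) \<and> x \<bullet> (msqrt (h i X) *v x) \<le> U * (x \<bullet> x)" for i x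
      unfolding L_def U_def
      using hb[OF X] c0 al b0 by (intro sqrt_form_bounds) auto
    have "sym_mat (G X)" unfolding Geq
      by (intro sym_scale sym_sum sym_add sym_neg sym_mat1 psd_sym conjunct1[OF msqrt_prop]) (use hb X in blast)
    moreover have "\<beta> * (x \<bullet> x) \<le> x \<bullet> (G X *v x)" for x
    proof -
      have "(\<Sum>i\<in>{1..N}. w i * ((L - 1) * (x \<bullet> x))) \<le> (\<Sum>i\<in>{1..N}. w i * (- (x \<bullet> x) + x \<bullet> (msqrt (h i X) *v x)))"
        using sq w0 by (intro sum_mono mult_left_mono) (auto simp: algebra_simps)
      moreover have "(\<Sum>i\<in>{1..N}. w i * ((L - 1) * (x \<bullet> x))) = (L - 1) * (x \<bullet> x)"
        using w_sum by (simp add: sum_distrib_right[symmetric])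
      ultimately have "eps/4 * ((L - 1) * (x \<bullet> x)) \<le> x \<bullet> (G X *v x)"
        unfolding Gform using eps_pos by (intro mult_left_mono) auto
      moreover have "\<beta> * (x \<bullet> x) \<le> eps/4 * (L - 1) * (x \<bullet> x)" using Lb by (intro mult_right_mono) auto
      ultimately show ?thesis by (simp add: mult.assoc)
    qed
    moreover have "x \<bullet> (G X *v x) \<le> \<gamma> * (x \<bullet> x)" for x
    proof -
      have "(\<Sum>i\<in>{1..N}. w i * (- (x \<bullet> x) + x \<bullet> (msqrt (h i X) *v x))) \<le> (\<Sum>i\<in>{1..N}. w i * ((U - 1) * (x \<bullet> x)))"
        using sq w0 by (intro sum_mono mult_left_mono) (auto simp: algebra_simps)
      moreover have "(\<Sum>i\<in>{1..N}. w i * ((U - 1) * (x \<bullet> x))) = (U - 1) * (x \<bullet> x)"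
        using w_sum by (simp add: sum_distrib_right[symmetric])
      ultimately have "x \<bullet> (G X *v x) \<le> eps/4 * ((U - 1) * (x \<bullet> x))"
        unfolding Gform using eps_pos by (intro mult_left_mono) auto
      moreover have "eps/4 * (U - 1) * (x \<bullet> x) \<le> \<gamma> * (x \<bullet> x)" using Ub by (intro mult_right_mono) auto
      ultimately show ?thesis by (simp add: mult.assoc)
    qed
    ultimately show ?thesis by (simp add: SS_def)
  qed
  have cR: "continuous_on SS msqrt" by (rule continuous_on_subset[OF msqrt_cont]) (use SSpsd in auto)
  have csh: "continuous_on SS (\<lambda>X. msqrt (h i X))" if i: "i \<in> {1..N}" for i
  proof (rule continuous_on_compose2[OF msqrt_cont])
    show "continuous_on SS (h i)" unfolding h_def
      by (intro continuous_intros cont_mmult cR)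
    show "h i ` SS \<subseteq> {A. psd_mat A}" using hb i by auto
  qed
  have cG: "continuous_on SS G"
  proof -
    have e: "G = (\<lambda>X. (eps/4) *\<^sub>R (\<Sum>i\<in>{1..N}. w i *\<^sub>R (- mat 1 + msqrt (h i X))))" using Geq by auto
    have "continuous_on SS (\<lambda>X. (eps/4) *\<^sub>R (\<Sum>i\<in>{1..N}. w i *\<^sub>R (- mat 1 + msqrt (h i X))))"
      by (intro continuous_intros csh) auto
    then show ?thesis unfolding e .
  qed
  have bdd: "bounded SS"
    unfolding bounded_iff
  proof (intro exI ballI)
    fix X assume X: "X \<in> SS"
    have q: "\<bar>x \<bullet> (X *v x)\<bar> \<le> \<gamma> * (norm x)^2" for x
    proof -
      have "0 \<le> \<beta> * (x \<bullet> x)" using b0 by simp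
      moreover have "\<beta> * (x \<bullet> x) \<le> x \<bullet> (X *v x)" "x \<bullet> (X *v x) \<le> \<gamma> * (x \<bullet> x)" using X by (auto simp: SS_def)
      ultimately show ?thesis by (simp add: power2_norm_eq_inner)
    qed
    have "\<bar>X$i$j\<bar> \<le> 2 * \<gamma>" for i j
      by (rule entry_bound[OF _ q]) (use X in \<open>simp add: SS_def\<close>)
    then show "norm X \<le> real (CARD('n))^2 * (2 * \<gamma>)" by (rule norm_mat_bound)
  qed
  have SSeq: "SS = {X. (\<forall>i j. X$j$i = X$i$j) \<and> (\<forall>x. \<beta> * (x \<bullet> x) \<le> x \<bullet> (X *v x))
                        \<and> (\<forall>x. x \<bullet> (X *v x) \<le> \<gamma> * (x \<bullet> x))}"
    by (simp add: SS_def sym_mat_iff)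
  have cl: "closed SS" unfolding SSeq
    by (intro closed_Collect_conj closed_Collect_all closed_Collect_eq closed_Collect_le
        continuous_intros cont_form)
  have cpt: "compact SS" using bdd cl by (simp add: compact_eq_bounded_closed)
  have cvx: "convex SS"
    unfolding convex_def
  proof (intro ballI allI impI)
    fix X Y :: "real^'n^'n" and u v :: real
    assume X: "X \<in> SS" and Y: "Y \<in> SS" and uu: "0 \<le> u" and vv: "0 \<le> v" and uv1: "u + v = 1"
    then have uv: "0 \<le> u \<and> 0 \<le> v \<and> u + v = 1" by simp
    then have v: "v = 1 - u" and u0: "0 \<le> u" "u \<le> 1" by auto
    have f: "x \<bullet> ((u *\<^sub>R X + v *\<^sub>R Y) *v x) = u * (x \<bullet> (X *v x)) + v * (x \<bullet> (Y *v x))" for x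
      by (simp add: matrix_vector_mult_add_rdistrib inner_add_right)
    have s: "sym_mat (u *\<^sub>R X + v *\<^sub>R Y)" using X Y by (intro sym_add sym_scale) (auto simp: SS_def)
    have lo: "\<beta> * (x \<bullet> x) \<le> x \<bullet> ((u *\<^sub>R X + v *\<^sub>R Y) *v x)" for x
    proof -
      have "u * (\<beta> * (x \<bullet> x)) \<le> u * (x \<bullet> (X *v x))" using X u0 by (intro mult_left_mono) (auto simp: SS_def)
      moreover have "v * (\<beta> * (x \<bullet> x)) \<le> v * (x \<bullet> (Y *v x))" using Y uv by (intro mult_left_mono) (auto simp: SS_def)
      ultimately show ?thesis unfolding f v by (simp add: algebra_simps)
    qed
    have hi: "x \<bullet> ((u *\<^sub>R X + v *\<^sub>R Y) *v x) \<le> \<gamma> * (x \<bullet> x)" for x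
    proof -
      have "u * (x \<bullet> (X *v x)) \<le> u * (\<gamma> * (x \<bullet> x))" using X u0 by (intro mult_left_mono) (auto simp: SS_def)
      moreover have "v * (x \<bullet> (Y *v x)) \<le> v * (\<gamma> * (x \<bullet> x))" using Y uv by (intro mult_left_mono) (auto simp: SS_def)
      ultimately show ?thesis unfolding f v by (simp add: algebra_simps)
    qed
    show "u *\<^sub>R X + v *\<^sub>R Y \<in> SS" using s lo hi by (simp add: SS_def)
  qed
  have ne: "\<gamma> *\<^sub>R mat 1 \<in> SS" using bg by (simp add: SS_def sym_scale sym_mat1 mult_right_mono)
  obtain X where X: "X \<in> SS" and fx: "G X = X"
    using brouwer[OF cpt cvx _ cG] Ginto ne by blast
  have "pd_mat X"
    unfolding pd_mat_def
  proof (intro conjI allI impI)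
    show "sym_mat X" using X by (simp add: SS_def)
    fix x :: "real^'n" assume "x \<noteq> 0"
    then have "0 < \<beta> * (x \<bullet> x)" using b0 by simp
    then show "0 < x \<bullet> (X *v x)" using X by (auto simp: SS_def intro: less_le_trans)
  qed
  then show ?thesis using fx G_def by blast
qed



lemma sqrt_minus_one: "0 \<le> s \<Longrightarrow> sqrt (1 + s) - 1 = s / (1 + sqrt (1 + s))"
proof -
  assume s: "0 \<le> s"
  have p: "0 < 1 + sqrt (1 + s)" using s by (simp add: add_pos_nonneg)
  have "(sqrt (1 + s) - 1) * (1 + sqrt (1 + s)) = s" using s by (simp add: algebra_simps)
  then show ?thesis using p by (simp add: eq_divide_eq)
qed

lemma aux1: "0 < D \<Longrightarrow> 0 < eps \<Longrightarrow>
   (w::real) * (eps/4 * (((4/eps)^2 * x * a) / D)) = x * (w * ((4*a/eps)/D))"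
  by (simp add: field_simps power2_eq_square)

lemma scal_part:
  fixes a w :: "nat \<Rightarrow> real" and eps :: real and N :: nat
  assumes eps_pos: "0 < eps" and w_pos: "\<And>i. i \<in> {1..N} \<Longrightarrow> 0 < w i"
    and w_sum: "(\<Sum>i\<in>{1..N}. w i) = 1"
    and a0: "\<And>i. i \<in> {1..N} \<Longrightarrow> 0 \<le> a i"
    and big: "eps < 2 * (\<Sum>i\<in>{1..N}. w i * a i)"
  defines "g \<equiv> \<lambda>x. (eps / 4) * (\<Sum>i\<in>{1..N}. w i * (- 1 + sqrt (1 + ((4 / eps)^2) * x * a i)))"
  shows "\<exists>!x. 0 < x \<and> x = g x"
proof -
  define q where "q x = (\<Sum>i\<in>{1..N}. w i * ((4 * a i / eps) / (1 + sqrt (1 + ((4 / eps)^2) * x * a i))))" for x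
  have gq: "g x = x * q x" if x: "0 \<le> x" for x
  proof -
    have "g x = (\<Sum>i\<in>{1..N}. w i * (eps/4 * (sqrt (1 + ((4 / eps)^2) * x * a i) - 1)))"
      unfolding g_def by (simp add: sum_distrib_left algebra_simps)
    also have "\<dots> = (\<Sum>i\<in>{1..N}. x * (w i * ((4 * a i / eps) / (1 + sqrt (1 + ((4 / eps)^2) * x * a i)))))"
    proof (intro sum.cong refl)
      fix i assume i: "i \<in> {1..N}"
      have s: "0 \<le> ((4 / eps)^2) * x * a i" using x a0[OF i] by simp
      have p: "0 < 1 + sqrt (1 + ((4 / eps)^2) * x * a i)" using s by (simp add: add_pos_nonneg)
      show "w i * (eps/4 * (sqrt (1 + ((4 / eps)^2) * x * a i) - 1)) =
            x * (w i * ((4 * a i / eps) / (1 + sqrt (1 + ((4 / eps)^2) * x * a i))))"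
        unfolding sqrt_minus_one[OF s] using p eps_pos by (rule aux1)
    qed
    also have "\<dots> = x * q x" by (simp add: q_def sum_distrib_left)
    finally show ?thesis .
  qed
  have den: "0 < 1 + sqrt (1 + ((4 / eps)^2) * x * a i)" if "0 \<le> x" "i \<in> {1..N}" for x i
    using that a0 by (simp add: add_pos_nonneg)
  obtain j where j: "j \<in> {1..N}" "0 < a j"
  proof -
    have "0 < (\<Sum>i\<in>{1..N}. w i * a i)" using big eps_pos by linarith
    have "\<exists>j\<in>{1..N}. a j \<noteq> 0"
    proof (rule ccontr)
      assume "\<not> (\<exists>j\<in>{1..N}. a j \<noteq> 0)"
      then have "(\<Sum>i\<in>{1..N}. w i * a i) = 0" by simp
      then show False using \<open>0 < (\<Sum>i\<in>{1..N}. w i * a i)\<close> by simp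
    qed
    then obtain j where "j \<in> {1..N}" "a j \<noteq> 0" by blast
    then show ?thesis using that a0 by force
  qed
  have term_mono: "(4 * a i / eps) / (1 + sqrt (1 + ((4 / eps)^2) * y * a i))
                    \<le> (4 * a i / eps) / (1 + sqrt (1 + ((4 / eps)^2) * x * a i))"
    if "0 \<le> x" "x \<le> y" "i \<in> {1..N}" for x y i
  proof (rule divide_left_mono)
    show "0 \<le> 4 * a i / eps" using a0[OF that(3)] eps_pos by simp
    have "((4 / eps)^2) * x * a i \<le> ((4 / eps)^2) * y * a i"
      using that a0[OF that(3)] by (intro mult_right_mono mult_left_mono) auto
    then show "1 + sqrt (1 + ((4 / eps)^2) * x * a i) \<le> 1 + sqrt (1 + ((4 / eps)^2) * y * a i)" by simp
    show "0 < (1 + sqrt (1 + ((4 / eps)^2) * y * a i)) * (1 + sqrt (1 + ((4 / eps)^2) * x * a i))"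
      using den that by (intro mult_pos_pos) auto
  qed
  have strict: "q y < q x" if xy: "0 \<le> x" "x < y" for x y
    unfolding q_def
  proof (rule sum_strict_mono_ex1)
    show "finite {1..N}" by simp
    show "\<forall>i\<in>{1..N}. w i * ((4 * a i / eps) / (1 + sqrt (1 + ((4 / eps)^2) * y * a i)))
            \<le> w i * ((4 * a i / eps) / (1 + sqrt (1 + ((4 / eps)^2) * x * a i)))"
    proof
      fix i assume i: "i \<in> {1..N}"
      show "w i * ((4 * a i / eps) / (1 + sqrt (1 + ((4 / eps)^2) * y * a i)))
            \<le> w i * ((4 * a i / eps) / (1 + sqrt (1 + ((4 / eps)^2) * x * a i)))"
        using mult_left_mono[OF term_mono[OF xy(1) less_imp_le[OF xy(2)] i] less_imp_le[OF w_pos[OF i]]] .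
    qed
    have "((4 / eps)^2) * x * a j < ((4 / eps)^2) * y * a j"
      using xy j eps_pos by (intro mult_strict_right_mono mult_strict_left_mono) auto
    then have "1 + sqrt (1 + ((4 / eps)^2) * x * a j) < 1 + sqrt (1 + ((4 / eps)^2) * y * a j)" by simp
    then have tj: "(4 * a j / eps) / (1 + sqrt (1 + ((4 / eps)^2) * y * a j))
                    < (4 * a j / eps) / (1 + sqrt (1 + ((4 / eps)^2) * x * a j))"
      using den[OF xy(1) j(1)] den[of y j] xy j eps_pos by (intro divide_strict_left_mono mult_pos_pos) auto
    then show "\<exists>i\<in>{1..N}. w i * ((4 * a i / eps) / (1 + sqrt (1 + ((4 / eps)^2) * y * a i)))
            < w i * ((4 * a i / eps) / (1 + sqrt (1 + ((4 / eps)^2) * x * a i)))"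
      using j(1) mult_strict_left_mono[OF tj w_pos[OF j(1)]] by blast
  qed
  have q0: "q 0 > 1"
  proof -
    have "q 0 = (\<Sum>i\<in>{1..N}. w i * (2 * a i / eps))" by (simp add: q_def)
    also have "\<dots> = (2 / eps) * (\<Sum>i\<in>{1..N}. w i * a i)" by (simp add: sum_distrib_left algebra_simps)
    finally have e: "q 0 = (2 / eps) * (\<Sum>i\<in>{1..N}. w i * a i)" .
    have "1 < (2 / eps) * (\<Sum>i\<in>{1..N}. w i * a i)" using big eps_pos by (simp add: field_simps)
    then show ?thesis using e by simp
  qed
  define B where "B = 1 + (\<Sum>i\<in>{1..N}. a i)"
  have "0 \<le> (\<Sum>i\<in>{1..N}. a i)" using a0 by (intro sum_nonneg) auto
  then have B0: "0 \<le> B" by (simp add: B_def)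
  have qB: "q B \<le> 1"
  proof -
    have "q B \<le> (\<Sum>i\<in>{1..N}. w i * 1)"
      unfolding q_def
    proof (intro sum_mono mult_left_mono)
      fix i assume i: "i \<in> {1..N}"
      show "0 \<le> w i" using w_pos[OF i] by simp
      have "a i \<le> (\<Sum>i\<in>{1..N}. a i)" using i a0 by (intro member_le_sum) auto
      then have aB: "a i \<le> B" unfolding B_def by simp
      have "(4 * a i / eps)^2 \<le> 1 + ((4 / eps)^2) * B * a i"
      proof -
        have "(4 * a i / eps)^2 = ((4 / eps)^2) * a i * a i" by (simp add: power2_eq_square)
        also have "\<dots> \<le> ((4 / eps)^2) * B * a i" using aB a0[OF i] by (intro mult_right_mono mult_left_mono) auto
        finally show ?thesis by simp
      qed
      then have "4 * a i / eps \<le> sqrt (1 + ((4 / eps)^2) * B * a i)" by (rule real_le_rsqrt)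
      then have "4 * a i / eps \<le> 1 + sqrt (1 + ((4 / eps)^2) * B * a i)" by simp
      then show "(4 * a i / eps) / (1 + sqrt (1 + ((4 / eps)^2) * B * a i)) \<le> 1"
        by (subst divide_le_eq_1_pos[OF den[OF B0 i]])
    qed
    then show ?thesis using w_sum by simp
  qed
  have cq: "continuous_on {0..B} q"
    unfolding q_def
  proof (intro continuous_on_sum)
    fix i assume i: "i \<in> {1..N}"
    have "\<forall>x\<in>{0..B}. 1 + sqrt (1 + ((4 / eps)^2) * x * a i) \<noteq> 0"
      using den[OF _ i] by (metis atLeastAtMost_iff less_irrefl)
    then show "continuous_on {0..B} (\<lambda>x. w i * ((4 * a i / eps) / (1 + sqrt (1 + ((4 / eps)^2) * x * a i))))"
      by (intro continuous_intros) auto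
  qed
  obtain x where x: "0 \<le> x" "x \<le> B" "q x = 1" using IVT2'[of q B 1 0] qB q0 B0 cq by auto
  have xpos: "0 < x" using x q0 by (cases "x = 0") auto
  have fix_iff: "(z = g z) \<longleftrightarrow> q z = 1" if "0 < z" for z
    using gq[of z] that by auto
  show ?thesis
  proof (rule ex1I[of _ x])
    have "x = g x" using fix_iff[OF xpos] x(3) by blast
    then show "0 < x \<and> x = g x" using xpos by blast
    fix y assume y: "0 < y \<and> y = g y"
    then have qy: "q y = 1" using fix_iff by blast
    show "y = x"
    proof (rule ccontr)
      assume "y \<noteq> x"
      then have "y < x \<or> x < y" by auto
      then show False using strict[of y x] strict[of x y] x(1,3) y qy by force
    qed
  qed
qed



lemma part2:
  fixes eps :: real and N :: nat and w :: "nat \<Rightarrow> real" and C :: "nat \<Rightarrow> real^'n^'n" and u :: "real^'n"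
  assumes eps_pos: "0 < eps"
    and w_pos: "\<And>i. i \<in> {1..N} \<Longrightarrow> 0 < w i"
    and w_sum: "(\<Sum>i\<in>{1..N}. w i) = 1"
    and C_psd: "\<And>i. i \<in> {1..N} \<Longrightarrow> psd_mat (C i)"
    and nu: "norm u = 1" and big: "eps < 2 * (\<Sum>i\<in>{1..N}. w i * (u \<bullet> (C i *v u)))"
  shows "(\<exists>!x. 0 < x \<and> x = gscal eps N w C u x)
              \<and> (let xu = (THE x. 0 < x \<and> x = gscal eps N w C u x)
                 in Gmap eps N w C (xu *\<^sub>R outer u u) = xu *\<^sub>R outer u u)"
proof -
  define a where "a i = u \<bullet> (C i *v u)" for i
  have a0: "0 \<le> a i" if "i \<in> {1..N}" for i using C_psd[OF that] by (simp add: psd_mat_def a_def)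
  define c where "c = (4 / eps)^2"
  have c0: "0 \<le> c" by (simp add: c_def)
  have geq: "gscal eps N w C u = (\<lambda>x. (eps / 4) * (\<Sum>i\<in>{1..N}. w i * (- 1 + sqrt (1 + ((4 / eps)^2) * x * a i))))"
    by (simp add: fun_eq_iff gscal_def a_def)
  have ex: "\<exists>!x. 0 < x \<and> x = gscal eps N w C u x"
    unfolding geq using scal_part[OF eps_pos w_pos w_sum a0] big by (simp add: a_def)
  define xu where "xu = (THE x. 0 < x \<and> x = gscal eps N w C u x)"
  have xu: "0 < xu" "xu = gscal eps N w C u xu" using theI'[OF ex] by (auto simp: xu_def)
  define P where "P = outer u u"
  have Pv: "P *v y = (u \<bullet> y) *\<^sub>R u" for y by (simp add: P_def outer_mvec)
  have uu: "u \<bullet> u = 1" using nu by (simp add: dot_square_norm)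
  have symP: "sym_mat P" by (simp add: P_def sym_mat_iff outer_def mult.commute)
  have R: "msqrt (xu *\<^sub>R P) = sqrt xu *\<^sub>R P"
  proof (rule msqrt_eq)
    show "psd_mat (sqrt xu *\<^sub>R P)"
      unfolding psd_mat_def using xu(1) symP by (auto simp: sym_scale Pv inner_commute mult.assoc)
    show "sqrt xu *\<^sub>R P ** sqrt xu *\<^sub>R P = xu *\<^sub>R P"
      unfolding matrix_eq
    proof
      fix y
      have "(sqrt xu *\<^sub>R P ** sqrt xu *\<^sub>R P) *v y = (sqrt xu *\<^sub>R P) *v ((sqrt xu *\<^sub>R P) *v y)"
        by (rule matrix_vector_mul_assoc[symmetric])
      also have "\<dots> = (sqrt xu * sqrt xu * (u \<bullet> y)) *\<^sub>R u" by (simp add: Pv uu)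
      also have "\<dots> = (xu *\<^sub>R P) *v y" using xu(1) by (simp add: Pv)
      finally show "(sqrt xu *\<^sub>R P ** sqrt xu *\<^sub>R P) *v y = (xu *\<^sub>R P) *v y" .
    qed
  qed
  have M: "msqrt (xu *\<^sub>R P) ** C i ** msqrt (xu *\<^sub>R P) = (xu * a i) *\<^sub>R P" for i
    unfolding matrix_eq R
  proof
    fix y
    have "(sqrt xu *\<^sub>R P ** C i ** sqrt xu *\<^sub>R P) *v y = (sqrt xu *\<^sub>R P) *v (C i *v ((sqrt xu *\<^sub>R P) *v y))"
      by (simp only: matrix_vector_mul_assoc matrix_mul_assoc)
    also have "\<dots> = (sqrt xu * sqrt xu * (u \<bullet> y) * a i) *\<^sub>R u"
      by (simp add: Pv a_def matrix_vector_mult_scaleR)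
    also have "\<dots> = ((xu * a i) *\<^sub>R P) *v y" using xu(1) by (simp add: Pv)
    finally show "(sqrt xu *\<^sub>R P ** C i ** sqrt xu *\<^sub>R P) *v y = ((xu * a i) *\<^sub>R P) *v y" .
  qed
  have Q: "msqrt (mat 1 + k *\<^sub>R P) = mat 1 + (sqrt (1 + k) - 1) *\<^sub>R P" if k0: "0 \<le> k" for k
  proof (rule msqrt_eq)
    define d where "d = sqrt (1 + k) - 1"
    have d0: "0 \<le> d" using k0 by (simp add: d_def)
    have dk: "2 * d + d * d = k"
    proof -
      have "sqrt (1 + k) * sqrt (1 + k) = 1 + k" using k0 by simp
      then show ?thesis by (simp add: d_def algebra_simps)
    qed
    have Iv: "(mat 1 + d *\<^sub>R P) *v y = y + (d * (u \<bullet> y)) *\<^sub>R u" for y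
      by (simp add: matrix_vector_mult_add_rdistrib Pv)
    show "psd_mat (mat 1 + (sqrt (1 + k) - 1) *\<^sub>R P)"
      unfolding psd_mat_def d_def[symmetric]
    proof (intro conjI allI)
      show "sym_mat (mat 1 + d *\<^sub>R P)" by (intro sym_add sym_mat1 sym_scale symP)
      fix x :: "real^'n"
      have "x \<bullet> ((mat 1 + d *\<^sub>R P) *v x) = x \<bullet> x + d * (u \<bullet> x) * (u \<bullet> x)"
        by (simp add: Iv inner_add_right inner_commute)
      also have "\<dots> \<ge> 0" using d0 by (simp add: mult.assoc add_nonneg_nonneg)
      finally show "0 \<le> x \<bullet> ((mat 1 + d *\<^sub>R P) *v x)" .
    qed
    show "(mat 1 + (sqrt (1 + k) - 1) *\<^sub>R P) ** (mat 1 + (sqrt (1 + k) - 1) *\<^sub>R P) = mat 1 + k *\<^sub>R P"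
      unfolding d_def[symmetric] matrix_eq
    proof
      fix y :: "real^'n"
      have sc: "d * (u \<bullet> y) + d * (u \<bullet> y + d * (u \<bullet> y)) = (2 * d + d * d) * (u \<bullet> y)"
        by (simp add: algebra_simps)
      have "((mat 1 + d *\<^sub>R P) ** (mat 1 + d *\<^sub>R P)) *v y = (mat 1 + d *\<^sub>R P) *v ((mat 1 + d *\<^sub>R P) *v y)"
        by (rule matrix_vector_mul_assoc[symmetric])
      also have "\<dots> = y + (d * (u \<bullet> y)) *\<^sub>R u + (d * (u \<bullet> y + d * (u \<bullet> y))) *\<^sub>R u"
        unfolding Iv by (simp add: inner_add_right uu)
      also have "\<dots> = y + (d * (u \<bullet> y) + d * (u \<bullet> y + d * (u \<bullet> y))) *\<^sub>R u"
        by (simp only: scaleR_add_left add.assoc)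
      also have "\<dots> = y + ((2 * d + d * d) * (u \<bullet> y)) *\<^sub>R u"
        using sc by simp
      also have "\<dots> = (mat 1 + k *\<^sub>R P) *v y" unfolding dk by (simp add: matrix_vector_mult_add_rdistrib Pv)
      finally show "((mat 1 + d *\<^sub>R P) ** (mat 1 + d *\<^sub>R P)) *v y = (mat 1 + k *\<^sub>R P) *v y" .
    qed
  qed
  have "Gmap eps N w C (xu *\<^sub>R P) = (eps/4) *\<^sub>R (\<Sum>i\<in>{1..N}. (w i * (- 1 + sqrt (1 + c * xu * a i))) *\<^sub>R P)"
    unfolding Gmap_def c_def[symmetric]
  proof (intro arg_cong[where f = "\<lambda>z. (eps/4) *\<^sub>R z"] sum.cong refl)
    fix i assume i: "i \<in> {1..N}"
    have k0: "0 \<le> c * (xu * a i)" using c0 xu(1) a0[OF i] by simp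
    have ms: "msqrt (mat 1 + c *\<^sub>R (msqrt (xu *\<^sub>R P) ** C i ** msqrt (xu *\<^sub>R P)))
          = mat 1 + (sqrt (1 + c * (xu * a i)) - 1) *\<^sub>R P"
      unfolding M scaleR_scaleR by (rule Q[OF k0])
    show "w i *\<^sub>R (- mat 1 + msqrt (mat 1 + c *\<^sub>R (msqrt (xu *\<^sub>R P) ** C i ** msqrt (xu *\<^sub>R P))))
          = (w i * (- 1 + sqrt (1 + c * xu * a i))) *\<^sub>R P"
    proof -
      have e: "- 1 + sqrt (1 + c * xu * a i) = sqrt (1 + c * (xu * a i)) - 1" by (simp add: mult.assoc)
      show ?thesis unfolding ms e by simp
    qed
  qed
  also have "\<dots> = gscal eps N w C u xu *\<^sub>R P"
    by (simp add: gscal_def a_def c_def scaleR_sum_left[symmetric])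
  also have "\<dots> = xu *\<^sub>R P" using xu(2) by simp
  finally have "Gmap eps N w C (xu *\<^sub>R P) = xu *\<^sub>R P" .
  then show ?thesis using ex by (simp add: xu_def[symmetric] P_def Let_def)
qed


theorem mainTheorem18:
  fixes eps :: real and N :: nat and w :: "nat \<Rightarrow> real"
    and C :: "nat \<Rightarrow> real^'n^'n"
  assumes eps_pos: "0 < eps"
    and w_pos: "\<And>i. i \<in> {1..N} \<Longrightarrow> 0 < w i"
    and w_sum: "(\<Sum>i\<in>{1..N}. w i) = 1"
    and C_psd: "\<And>i. i \<in> {1..N} \<Longrightarrow> psd_mat (C i)"
  shows "((\<exists>\<alpha>>0. (\<forall>i\<in>{1..N}. loewner_ge (C i) (\<alpha> *\<^sub>R mat 1)) \<and> eps < 2 * \<alpha>)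
            \<longrightarrow> (\<exists>X. pd_mat X \<and> Gmap eps N w C X = X))
       \<and> (\<forall>u :: real^'n. norm u = 1 \<and> eps < 2 * (\<Sum>i\<in>{1..N}. w i * (u \<bullet> (C i *v u)))
            \<longrightarrow> (\<exists>!x. 0 < x \<and> x = gscal eps N w C u x)
              \<and> (let xu = (THE x. 0 < x \<and> x = gscal eps N w C u x)
                 in Gmap eps N w C (xu *\<^sub>R outer u u) = xu *\<^sub>R outer u u))"
  proof -
  have p1: "(\<exists>\<alpha>>0. (\<forall>i\<in>{1..N}. loewner_ge (C i) (\<alpha> *\<^sub>R mat 1)) \<and> eps < 2 * \<alpha>)
            \<longrightarrow> (\<exists>X. pd_mat X \<and> Gmap eps N w C X = X)"
  proof
    assume "\<exists>\<alpha>>0. (\<forall>i\<in>{1..N}. loewner_ge (C i) (\<alpha> *\<^sub>R mat 1)) \<and> eps < 2 * \<alpha>"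
    then obtain \<alpha> where a: "0 < \<alpha>" "\<forall>i\<in>{1..N}. loewner_ge (C i) (\<alpha> *\<^sub>R mat 1)" "eps < 2 * \<alpha>" by blast
    show "\<exists>X. pd_mat X \<and> Gmap eps N w C X = X"
      by (rule part1[where eps=eps and N=N and w=w and C=C and \<alpha>=\<alpha>]) (use eps_pos w_pos w_sum C_psd a in auto)
  qed
  have p2: "\<forall>u :: real^'n. norm u = 1 \<and> eps < 2 * (\<Sum>i\<in>{1..N}. w i * (u \<bullet> (C i *v u)))
            \<longrightarrow> (\<exists>!x. 0 < x \<and> x = gscal eps N w C u x)
              \<and> (let xu = (THE x. 0 < x \<and> x = gscal eps N w C u x)
                 in Gmap eps N w C (xu *\<^sub>R outer u u) = xu *\<^sub>R outer u u)"
  proof (intro allI impI)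
    fix u :: "real^'n"
    assume u: "norm u = 1 \<and> eps < 2 * (\<Sum>i\<in>{1..N}. w i * (u \<bullet> (C i *v u)))"
    show "(\<exists>!x. 0 < x \<and> x = gscal eps N w C u x)
              \<and> (let xu = (THE x. 0 < x \<and> x = gscal eps N w C u x)
                 in Gmap eps N w C (xu *\<^sub>R outer u u) = xu *\<^sub>R outer u u)"
      by (rule part2[where eps=eps and N=N and w=w and C=C and u=u]) (use eps_pos w_pos w_sum C_psd u in auto)
  qed
  show ?thesis using p1 p2 by blast
qed

end
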